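(* Let $n\ge 2$ and let $\epsilon_n$ be a primitive $n$-th root of unity in $\mathbb{C}$. On the vector space $\mathscr{C}_n=\mathbb{C}[z]/(z^n-1)$ define the multiplication $$p(z)\circ q(z)=p(\epsilon_n z)\,q(\epsilon_n z)\mod (z^n-1).$$ Then $(\mathscr{C}_n,\circ)$ is an $n$-dimensional commutative medial isospectral algebra over $\mathbb{C}$. Furthermore, every $p\in\mathscr{C}_n$ satisfies $p^{n+1}=\beta(p)\,p$ (principal powers with respect to $\circ$), where $$\beta(p)=p(1)\,p(\epsilon_n)\,p(\epsilon_n^2)\cdots p(\epsilon_n^{n-1}),$$ and $\beta:\mathscr{C}_n\to\mathbb{C}$ is a multiplicative homomorphism.
   Context: An algebra is medial if $(xy)(zw)=(xz)(yw)$ for all $x,y,z,w$. For an idempotent $c$, the spectrum of $c$ is the multiset of eigenvalues of $L_c:x\mapsto cx$; an algebra is isospectral if all its nonzero idempotents have the same spectrum. Principal powers: $x^1=x$, $x^{k+1}=x\circ x^k$. $p(\alpha)$ for $p\in\mathscr{C}_n$ and $\alpha^n=1$ is well defined. *)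

theory Defs
  imports "HOL-Computational_Algebra.Polynomial" "Jordan_Normal_Form.Char_Poly"
begin

definition primitive_root :: "nat \<Rightarrow> complex \<Rightarrow> bool" where
  "primitive_root n e \<longleftrightarrow> e ^ n = 1 \<and> (\<forall>k. 0 < k \<and> k < n \<longrightarrow> e ^ k \<noteq> 1)"

text \<open>The carrier of C_n = C[z]/(z^n - 1): canonical representatives, i.e.
  polynomials of degree < n (the zero polynomial included).\<close>
definition Cn :: "nat \<Rightarrow> complex poly set" where
  "Cn n = {p. degree p < n}"

definition circ :: "nat \<Rightarrow> complex \<Rightarrow> complex poly \<Rightarrow> complex poly \<Rightarrow> complex poly" where
  "circ n e p q = (pcompose p [:0, e:] * pcompose q [:0, e:]) mod (monom 1 n - 1)"

fun principal_power :: "('a \<Rightarrow> 'a \<Rightarrow> 'a) \<Rightarrow> nat \<Rightarrow> 'a \<Rightarrow> 'a" where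
  "principal_power f 0 x = undefined"
| "principal_power f (Suc 0) x = x"
| "principal_power f (Suc (Suc k)) x = f x (principal_power f (Suc k) x)"

definition Lmat :: "nat \<Rightarrow> complex \<Rightarrow> complex poly \<Rightarrow> complex mat" where
  "Lmat n e c = mat n n (\<lambda>(i, j). coeff (circ n e c (monom 1 j)) i)"

definition spectrum_Cn :: "nat \<Rightarrow> complex \<Rightarrow> complex poly \<Rightarrow> complex multiset" where
  "spectrum_Cn n e c = proots (char_poly (Lmat n e c))"

definition beta :: "nat \<Rightarrow> complex \<Rightarrow> complex poly \<Rightarrow> complex" where
  "beta n e p = (\<Prod>k<n. poly p (e ^ k))"

end

theory Submission
  imports Defs
begin

lemma poly_expand:
  fixes p :: "'a::comm_ring_1 poly"
  assumes "degree p < n"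
  shows "p = (\<Sum>j<n. monom (coeff p j) j)"
proof (rule poly_eqI)
  fix i
  show "coeff p i = coeff (\<Sum>j<n. monom (coeff p j) j) i"
    using assms by (auto simp: coeff_sum coeff_monom coeff_eq_0)
qed

lemma prod_shift1:
  fixes g :: "nat \<Rightarrow> 'a::comm_monoid_mult"
  assumes "g n = g 0"
  shows "(\<Prod>j<n. g (Suc j)) = (\<Prod>j<n. g j)"
proof (cases n)
  case 0 thus ?thesis by simp
next
  case (Suc m)
  have "(\<Prod>j<n. g (Suc j)) = (\<Prod>j<m. g (Suc j)) * g n" by (simp add: Suc)
  also have "\<dots> = g 0 * (\<Prod>j<m. g (Suc j))" using assms by (simp add: mult.commute)
  also have "\<dots> = (\<Prod>j<n. g j)" by (simp only: Suc prod.lessThan_Suc_shift)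
  finally show ?thesis .
qed

lemma prod_shift:
  fixes f :: "nat \<Rightarrow> 'a::comm_monoid_mult"
  assumes "\<And>j. f (j + n) = f j"
  shows "(\<Prod>j<n. f (j + s)) = (\<Prod>j<n. f j)"
proof (induction s)
  case 0 thus ?case by simp
next
  case (Suc s)
  have "(\<Prod>j<n. f (j + Suc s)) = (\<Prod>j<n. (\<lambda>j. f (j + s)) (Suc j))" by simp
  also have "\<dots> = (\<Prod>j<n. f (j + s))"
    by (rule prod_shift1) (use assms[of s] in \<open>simp add: add.commute\<close>)
  finally show ?case using Suc by simp
qed

lemma Cn_add: "p \<in> Cn n \<Longrightarrow> q \<in> Cn n \<Longrightarrow> p + q \<in> Cn n"
  unfolding Cn_def by (auto intro: le_less_trans[OF degree_add_le_max])
lemma Cn_diff: "p \<in> Cn n \<Longrightarrow> q \<in> Cn n \<Longrightarrow> p - q \<in> Cn n"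
  unfolding Cn_def by (auto intro: le_less_trans[OF degree_diff_le_max])
lemma Cn_smult: "p \<in> Cn n \<Longrightarrow> Polynomial.smult a p \<in> Cn n"
  unfolding Cn_def by (auto intro: le_less_trans[OF degree_smult_le])
lemma Cn_zero: "0 < n \<Longrightarrow> 0 \<in> Cn n"
  unfolding Cn_def by auto
lemma Cn_monom: "j < n \<Longrightarrow> monom c j \<in> Cn n"
  unfolding Cn_def by (auto intro: le_less_trans[OF degree_monom_le])
lemma Cn_sum: "0 < n \<Longrightarrow> (\<And>x. x \<in> A \<Longrightarrow> f x \<in> Cn n) \<Longrightarrow> sum f A \<in> Cn n"
  by (induction A rule: infinite_finite_induct) (auto intro: Cn_add Cn_zero)

context
  fixes n :: nat and e :: complex
  assumes n2: "n \<ge> 2" and prim: "primitive_root n e"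
begin

lemma e_pow_n: "e ^ n = 1" using prim by (simp add: primitive_root_def)
lemma n_pos: "0 < n" using n2 by simp
lemma e_nz: "e \<noteq> 0" using e_pow_n n_pos by (metis zero_neq_one zero_power)

lemma e_periodic: "e ^ (k + n * t) = e ^ k"
  by (simp add: power_add power_mult e_pow_n)

lemma e_periodic1: "e ^ (k + n) = e ^ k"
  using e_periodic[of k 1] by simp

lemma e_inj: assumes "i < n" "j < n" "e ^ i = e ^ j" shows "i = j"
proof (rule ccontr)
  assume ne: "i \<noteq> j"
  have key: "\<And>a b. a < b \<Longrightarrow> b < n \<Longrightarrow> e ^ a = e ^ b \<Longrightarrow> False"
  proof -
    fix a b assume ab: "a < b" "b < n" "e ^ a = e ^ b"
    have "e ^ b = e ^ a * e ^ (b - a)" using ab by (metis le_add_diff_inverse less_imp_le power_add)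
    hence "e ^ (b - a) = 1" using ab e_nz by simp
    thus False using prim ab unfolding primitive_root_def by auto
  qed
  show False using ne assms key[of i j] key[of j i] by (cases "i < j") auto
qed

lemma root_m: "poly (monom 1 n - 1) (e ^ k) = 0"
proof -
  have "(e ^ k) ^ n = (e ^ n) ^ k" by (simp add: power_mult[symmetric] mult.commute)
  thus ?thesis by (simp add: poly_monom e_pow_n)
qed

lemma m_nz: "monom 1 n - 1 \<noteq> (0::complex poly)"
proof
  assume "monom 1 n - 1 = (0::complex poly)"
  hence "coeff (monom 1 n - 1 :: complex poly) n = 0" by simp
  thus False using n_pos by (simp add: coeff_monom)
qed

lemma deg_m: "degree (monom 1 n - 1 :: complex poly) = n"
proof (rule antisym)
  show "degree (monom 1 n - 1 :: complex poly) \<le> n"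
    by (rule order.trans[OF degree_diff_le_max]) (auto simp: degree_monom_le)
  show "n \<le> degree (monom 1 n - 1 :: complex poly)"
    by (rule le_degree) (use n_pos in \<open>simp add: coeff_monom\<close>)
qed

lemma poly_mod_m: "poly (P mod (monom 1 n - 1)) (e ^ k) = poly P (e ^ k)"
proof -
  have "poly P (e ^ k) = poly (P div (monom 1 n - 1) * (monom 1 n - 1) + P mod (monom 1 n - 1)) (e ^ k)"
    by (simp only: div_mult_mod_eq)
  also have "\<dots> = poly (P mod (monom 1 n - 1)) (e ^ k)"
    by (metis poly_add poly_mult root_m mult_zero_right add_0)
  finally show ?thesis by simp
qed

lemma Cn_mod: "P mod (monom 1 n - 1) \<in> Cn n"
  using degree_mod_less[OF m_nz, of P] deg_m n_pos unfolding Cn_def by auto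

lemma circ_Cn: "circ n e p q \<in> Cn n"
  unfolding circ_def by (rule Cn_mod)

lemma ev_circ: "poly (circ n e p q) (e ^ k) = poly p (e ^ Suc k) * poly q (e ^ Suc k)"
  unfolding circ_def poly_mod_m by (simp add: poly_pcompose mult.commute)

lemma Cn_zero_eval:
  assumes p: "p \<in> Cn n" and z: "\<And>k. k < n \<Longrightarrow> poly p (e ^ k) = 0"
  shows "p = 0"
proof (rule ccontr)
  assume pnz: "p \<noteq> 0"
  define S where "S = (\<lambda>k. e ^ k) ` {..<n}"
  have cardS: "card S = n" unfolding S_def
    by (subst card_image) (auto intro: inj_onI e_inj)
  have "mset_set S \<subseteq># proots p"
    unfolding subseteq_mset_def
  proof
    fix x
    show "count (mset_set S) x \<le> count (proots p) x"
    proof (cases "x \<in> S")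
      case True
      then obtain k where "k < n" "x = e ^ k" unfolding S_def by auto
      hence "poly p x = 0" using z by simp
      hence "order x p \<noteq> 0" using pnz order_root by blast
      thus ?thesis using True pnz by (simp add: S_def)
    qed (simp add: S_def)
  qed
  hence "size (mset_set S) \<le> size (proots p)" by (rule size_mset_mono)
  also have "\<dots> \<le> degree p" by (rule size_proots_le)
  finally show False using cardS p unfolding Cn_def by simp
qed

lemma Cn_eqI:
  assumes "p \<in> Cn n" "q \<in> Cn n" "\<And>k. k < n \<Longrightarrow> poly p (e ^ k) = poly q (e ^ k)"
  shows "p = q"
  using Cn_zero_eval[of "p - q"] Cn_diff[OF assms(1,2)] assms(3) by simp


lemma lag_eval:
  assumes i: "i < n" and k: "k < n"
  shows "poly (\<Sum>j<n. monom ((inverse e ^ i) ^ j / of_nat n) j) (e ^ k) = (if i = k then 1 else 0)"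
proof -
  define w where "w = inverse e ^ i * e ^ k"
  have "poly (\<Sum>j<n. monom ((inverse e ^ i) ^ j / of_nat n) j) (e ^ k) = (\<Sum>j<n. w ^ j) / of_nat n"
    by (simp add: poly_sum poly_monom w_def power_mult_distrib sum_divide_distrib)
  also have "\<dots> = (if i = k then 1 else 0)"
  proof (cases "i = k")
    case True
    hence "w = 1" using e_nz by (simp add: w_def power_inverse)
    thus ?thesis using True n_pos by simp
  next
    case False
    have w1: "w \<noteq> 1"
    proof
      assume "w = 1"
      hence "e ^ k = e ^ i" using e_nz by (simp add: w_def power_inverse field_simps)
      thus False using e_inj[OF k i] False by simp
    qed
    have "w ^ n = inverse ((e ^ n) ^ i) * (e ^ n) ^ k"
      by (simp add: w_def power_mult_distrib power_inverse power_mult[symmetric] mult.commute)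
    hence wn: "w ^ n = 1" by (simp add: e_pow_n)
    show ?thesis using False geometric_sum[OF w1, of n] wn by simp
  qed
  finally show ?thesis .
qed

lemma interp: "\<exists>p\<in>Cn n. \<forall>k<n. poly p (e ^ k) = y k"
proof
  let ?L = "\<lambda>i. \<Sum>j<n. monom ((inverse e ^ i) ^ j / of_nat n) j"
  let ?p = "\<Sum>i<n. Polynomial.smult (y i) (?L i)"
  show "?p \<in> Cn n" by (intro Cn_sum[OF n_pos] Cn_smult Cn_monom) auto
  show "\<forall>k<n. poly ?p (e ^ k) = y k"
  proof (intro allI impI)
    fix k assume k: "k < n"
    have "poly ?p (e ^ k) = (\<Sum>i<n. y i * poly (?L i) (e ^ k))"
      by (subst poly_sum) (simp only: poly_smult)
    also have "\<dots> = (\<Sum>i<n. if i = k then y i else 0)"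
    proof (rule sum.cong)
      fix i assume "i \<in> {..<n}"
      hence "i < n" by simp
      from lag_eval[OF this k] show "y i * poly (?L i) (e ^ k) = (if i = k then y i else 0)" by simp
    qed simp
    also have "\<dots> = y k" using k by simp
    finally show "poly ?p (e ^ k) = y k" .
  qed
qed

lemma ev_period: "poly p (e ^ (k + n)) = poly p (e ^ k)"
  by (simp add: e_periodic1)

lemma circ_lin:
  assumes "p \<in> Cn n" "q \<in> Cn n"
  shows "circ n e (Polynomial.smult a p + q) r = Polynomial.smult a (circ n e p r) + circ n e q r"
  by (rule Cn_eqI) (auto simp: circ_Cn Cn_add Cn_smult ev_circ algebra_simps)

lemma circ_comm: "circ n e p q = circ n e q p"
  unfolding circ_def by (simp add: mult.commute)

lemma circ_medial:
  "circ n e (circ n e x y) (circ n e z w) = circ n e (circ n e x z) (circ n e y w)"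
proof (rule Cn_eqI)
  fix k show "poly (circ n e (circ n e x y) (circ n e z w)) (e ^ k) = poly (circ n e (circ n e x z) (circ n e y w)) (e ^ k)"
    by (simp only: ev_circ) (simp add: algebra_simps)
qed (auto simp: circ_Cn)

lemma pp_Cn: "p \<in> Cn n \<Longrightarrow> principal_power (circ n e) (Suc m) p \<in> Cn n"
  by (cases m) (auto simp: circ_Cn)

lemma pp_eval:
  "poly (principal_power (circ n e) (Suc m) p) (e ^ k)
     = (\<Prod>j<m. poly p (e ^ (k + 1 + j))) * poly p (e ^ (k + m))"
proof (induction m arbitrary: k)
  case 0 then show ?case by simp
next
  case (Suc m)
  have "poly (principal_power (circ n e) (Suc (Suc m)) p) (e ^ k)
      = poly p (e ^ Suc k) * poly (principal_power (circ n e) (Suc m) p) (e ^ Suc k)"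
    by (simp only: principal_power.simps ev_circ)
  also have "\<dots> = poly p (e ^ Suc k) * ((\<Prod>j<m. poly p (e ^ (Suc k + 1 + j))) * poly p (e ^ (Suc k + m)))"
    by (simp only: Suc.IH)
  also have "\<dots> = (\<Prod>j<Suc m. poly p (e ^ (k + 1 + j))) * poly p (e ^ (k + Suc m))"
    by (simp only: prod.lessThan_Suc_shift) (simp add: ac_simps)
  finally show ?case .
qed

lemma beta_shift: "(\<Prod>j<n. poly p (e ^ (j + s))) = beta n e p"
  unfolding beta_def by (rule prod_shift) (rule ev_period)

lemma pp_main:
  assumes p: "p \<in> Cn n"
  shows "principal_power (circ n e) (n + 1) p = Polynomial.smult (beta n e p) p"
proof (rule Cn_eqI)
  show "principal_power (circ n e) (n + 1) p \<in> Cn n" using pp_Cn[OF p, of n] by simp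
  show "Polynomial.smult (beta n e p) p \<in> Cn n" using p by (rule Cn_smult)
  fix k
  have "poly (principal_power (circ n e) (n + 1) p) (e ^ k)
     = (\<Prod>j<n. poly p (e ^ (j + (k + 1)))) * poly p (e ^ (k + n))"
    using pp_eval[where m=n and k=k and p=p] by (simp add: ac_simps)
  also have "\<dots> = beta n e p * poly p (e ^ k)" by (simp only: beta_shift ev_period)
  finally show "poly (principal_power (circ n e) (n + 1) p) (e ^ k) = poly (Polynomial.smult (beta n e p) p) (e ^ k)"
    by simp
qed

lemma beta_circ: "beta n e (circ n e p q) = beta n e p * beta n e q"
proof -
  have "beta n e (circ n e p q) = (\<Prod>k<n. poly p (e ^ (k + 1)) * poly q (e ^ (k + 1)))"
    unfolding beta_def by (simp add: ev_circ)
  also have "\<dots> = (\<Prod>k<n. poly p (e ^ (k + 1))) * (\<Prod>k<n. poly q (e ^ (k + 1)))"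
    by (rule prod.distrib)
  also have "\<dots> = beta n e p * beta n e q" by (simp only: beta_shift)
  finally show ?thesis .
qed


lemma idem_nz:
  assumes c: "c \<in> Cn n" "c \<noteq> 0" "circ n e c c = c"
  shows "poly c (e ^ k) \<noteq> 0"
proof
  assume k0: "poly c (e ^ k) = 0"
  have sq: "poly c (e ^ j) = poly c (e ^ Suc j) * poly c (e ^ Suc j)" for j
    using ev_circ[of c c j] c(3) by simp
  have all: "poly c (e ^ (k + j)) = 0" for j
  proof (induction j)
    case 0 thus ?case using k0 by simp
  next
    case (Suc j) thus ?case using sq[of "k + j"] by simp
  qed
  have "c = 0"
  proof (rule Cn_zero_eval[OF c(1)])
    fix m assume "m < n"
    have "k \<le> m + n * k" using n_pos by (simp add: trans_le_add2)
    hence "m + n * k = k + (m + n * k - k)" by simp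
    hence "poly c (e ^ (m + n * k)) = 0" using all by metis
    thus "poly c (e ^ m) = 0" by (simp only: e_periodic)
  qed
  thus False using c by simp
qed

lemma idem_beta:
  assumes c: "c \<in> Cn n" "c \<noteq> 0" "circ n e c c = c"
  shows "beta n e c = 1"
proof -
  have nz: "beta n e c \<noteq> 0" unfolding beta_def using idem_nz[OF c] by simp
  have "beta n e c = beta n e c * beta n e c" using beta_circ[of c c] c(3) by simp
  thus ?thesis using nz by simp
qed

lemma idem_eigen:
  assumes c: "c \<in> Cn n" "c \<noteq> 0" "circ n e c c = c"
  shows "\<exists>p\<in>Cn n. p \<noteq> 0 \<and> circ n e c p = Polynomial.smult (e ^ m) p"
proof -
  define a where "a k = poly c (e ^ k)" for k
  define l where "l = e ^ m"
  define P where "P k = (\<Prod>j<k. a (Suc j))" for k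
  define y where "y k = l ^ k / P k" for k
  have anz: "a k \<noteq> 0" for k unfolding a_def using idem_nz[OF c] .
  have Pnz: "P k \<noteq> 0" for k unfolding P_def using anz by simp
  have ln: "l ^ n = 1" unfolding l_def by (metis e_pow_n power_mult mult.commute power_one)
  obtain p where p: "p \<in> Cn n" and py: "\<And>k. k < n \<Longrightarrow> poly p (e ^ k) = y k"
    using interp[of y] by blast
  have y0: "y 0 = 1" by (simp add: y_def P_def)
  have "circ n e c p = Polynomial.smult l p"
  proof (rule Cn_eqI[OF circ_Cn Cn_smult[OF p]])
    fix k assume k: "k < n"
    have lhs: "poly (circ n e c p) (e ^ k) = a (Suc k) * poly p (e ^ Suc k)"
      by (simp only: ev_circ a_def)
    show "poly (circ n e c p) (e ^ k) = poly (Polynomial.smult l p) (e ^ k)"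
    proof (cases "Suc k < n")
      case True
      have "a (Suc k) * poly p (e ^ Suc k) = a (Suc k) * (l ^ Suc k / (P k * a (Suc k)))"
        using py[OF True] by (simp add: y_def P_def)
      also have "\<dots> = l * y k" using anz[of "Suc k"] Pnz[of k] by (simp add: y_def field_simps)
      finally show ?thesis using lhs py[OF k] by simp
    next
      case False
      hence kn: "Suc k = n" using k by simp
      have en: "e ^ Suc k = e ^ 0" using kn e_pow_n by simp
      have "a 0 * P k = (\<Prod>j<Suc k. a j)" by (simp only: P_def prod.lessThan_Suc_shift)
      also have "\<dots> = 1" using idem_beta[OF c] kn by (simp add: beta_def a_def)
      finally have a0: "a 0 * P k = 1" .
      have lk: "l * l ^ k = 1" using ln kn by (metis power_Suc)
      have "a (Suc k) * poly p (e ^ Suc k) = a 0 * y 0"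
        using py[of 0] n_pos en by (simp add: a_def)
      also have "\<dots> = l * y k" using a0 Pnz[of k] lk y0
        by (simp add: y_def field_simps)
      finally show ?thesis using lhs py[OF k] by simp
    qed
  qed
  moreover have "p \<noteq> 0" using py[of 0] n_pos y0 by auto
  ultimately show ?thesis using p l_def by blast
qed

lemma circ_sum2:
  assumes p: "p \<in> Cn n"
  shows "circ n e c p = (\<Sum>j<n. Polynomial.smult (coeff p j) (circ n e c (monom 1 j)))"
proof (rule Cn_eqI[OF circ_Cn])
  show "(\<Sum>j<n. Polynomial.smult (coeff p j) (circ n e c (monom 1 j))) \<in> Cn n"
    by (intro Cn_sum[OF n_pos] Cn_smult circ_Cn)
  fix k
  have pe: "poly p x = (\<Sum>j<n. coeff p j * x ^ j)" for x
    by (subst poly_expand[of p n]) (use p in \<open>auto simp: Cn_def poly_sum poly_monom\<close>)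
  show "poly (circ n e c p) (e ^ k) = poly (\<Sum>j<n. Polynomial.smult (coeff p j) (circ n e c (monom 1 j))) (e ^ k)"
    by (simp only: poly_sum poly_smult ev_circ pe poly_monom) (simp add: sum_distrib_left ac_simps)
qed

lemma Lmat_mult:
  assumes p: "p \<in> Cn n"
  shows "Lmat n e c *\<^sub>v vec n (coeff p) = vec n (coeff (circ n e c p))"
proof (rule eq_vecI)
  show "dim_vec (Lmat n e c *\<^sub>v vec n (coeff p)) = dim_vec (vec n (coeff (circ n e c p)))"
    by (simp add: Lmat_def)
  fix i assume "i < dim_vec (vec n (coeff (circ n e c p)))"
  hence i: "i < n" by simp
  have "(Lmat n e c *\<^sub>v vec n (coeff p)) $ i = (\<Sum>j<n. coeff (circ n e c (monom 1 j)) i * coeff p j)"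
    using i by (simp add: Lmat_def scalar_prod_def lessThan_atLeast0)
  also have "\<dots> = coeff (circ n e c p) i"
    by (subst circ_sum2[OF p]) (simp add: coeff_sum mult.commute)
  finally show "(Lmat n e c *\<^sub>v vec n (coeff p)) $ i = vec n (coeff (circ n e c p)) $ i"
    using i by simp
qed

lemma Lmat_carrier: "Lmat n e c \<in> carrier_mat n n"
  by (simp add: Lmat_def)

lemma idem_eigenvalue:
  assumes c: "c \<in> Cn n" "c \<noteq> 0" "circ n e c c = c"
  shows "eigenvalue (Lmat n e c) (e ^ m)"
proof -
  obtain p where p: "p \<in> Cn n" "p \<noteq> 0" "circ n e c p = Polynomial.smult (e ^ m) p"
    using idem_eigen[OF c] by blast
  have nz: "vec n (coeff p) \<noteq> 0\<^sub>v n"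
  proof
    assume "vec n (coeff p) = 0\<^sub>v n"
    hence "\<And>j. j < n \<Longrightarrow> coeff p j = 0" by (metis index_vec index_zero_vec(1))
    hence z: "\<And>j. j < n \<Longrightarrow> coeff p j = 0" .
    have "p = (\<Sum>j<n. monom (coeff p j) j)" by (rule poly_expand) (use p(1) in \<open>simp add: Cn_def\<close>)
    also have "\<dots> = 0" using z by simp
    finally have "p = 0" .
    thus False using p by simp
  qed
  have "eigenvector (Lmat n e c) (vec n (coeff p)) (e ^ m)"
  proof -
    have ev: "Lmat n e c *\<^sub>v vec n (coeff p) = e ^ m \<cdot>\<^sub>v vec n (coeff p)"
      by (simp only: Lmat_mult[OF p(1)] p(3)) (auto intro!: eq_vecI)
    have dr: "dim_row (Lmat n e c) = n" by (simp add: Lmat_def)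
    show ?thesis unfolding eigenvector_def dr using nz ev by simp
  qed
  thus ?thesis unfolding eigenvalue_def by blast
qed

lemma idem_spectrum:
  assumes c: "c \<in> Cn n" "c \<noteq> 0" "circ n e c c = c"
  shows "spectrum_Cn n e c = mset_set ((\<lambda>k. e ^ k) ` {..<n})"
proof -
  define S where "S = (\<lambda>k. e ^ k) ` {..<n}"
  define P where "P = char_poly (Lmat n e c)"
  have dP: "degree P = n" and cP: "coeff P n = 1"
    using degree_monic_char_poly[OF Lmat_carrier] unfolding P_def by auto
  have Pnz: "P \<noteq> 0" using cP by auto
  have cardS: "card S = n" unfolding S_def
    by (subst card_image) (auto intro: inj_onI e_inj)
  have sub: "mset_set S \<subseteq># proots P"
    unfolding subseteq_mset_def
  proof
    fix x
    show "count (mset_set S) x \<le> count (proots P) x"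
    proof (cases "x \<in> S")
      case True
      then obtain k where "k < n" "x = e ^ k" unfolding S_def by auto
      hence "poly P x = 0" unfolding P_def
        using idem_eigenvalue[OF c] eigenvalue_root_char_poly[OF Lmat_carrier] by simp
      hence "order x P \<noteq> 0" using Pnz order_root by blast
      thus ?thesis using True Pnz by (simp add: S_def)
    qed (simp add: S_def)
  qed
  have "size (proots P) \<le> size (mset_set S)" using size_proots_le[of P] dP cardS by simp
  hence "mset_set S = proots P"
    using sub mset_subset_size subset_mset.le_neq_trans[OF sub] by fastforce
  thus ?thesis unfolding spectrum_Cn_def P_def S_def by simp
qed
end

lemma vs_poly: "vector_space (Polynomial.smult :: complex \<Rightarrow> complex poly \<Rightarrow> complex poly)"
  by (unfold_locales) (simp_all add: smult_add_right smult_add_left)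

interpretation V: vector_space "Polynomial.smult :: complex \<Rightarrow> complex poly \<Rightarrow> complex poly"
  by (rule vs_poly)

lemma Cn_subspace: "0 < n \<Longrightarrow> V.subspace (Cn n)"
  unfolding V.subspace_def by (auto intro: Cn_zero Cn_add Cn_smult)

lemma Cn_dim:
  assumes n: "0 < n"
  shows "V.dim (Cn n) = n"
proof -
  define B where "B = (\<lambda>j. monom (1::complex) j) ` {..<n}"
  have inj: "inj_on (\<lambda>j. monom (1::complex) j) {..<n}"
    by (rule inj_onI) (metis monom_eq_iff' one_neq_zero)
  have cardB: "card B = n" unfolding B_def by (simp add: card_image[OF inj])
  have BC: "B \<subseteq> Cn n" unfolding B_def by (auto intro: Cn_monom)
  have CB: "Cn n \<subseteq> V.span B"
  proof
    fix p assume p: "p \<in> Cn n"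
    have "p = (\<Sum>j<n. monom (coeff p j) j)" by (rule poly_expand) (use p in \<open>simp add: Cn_def\<close>)
    also have "\<dots> = (\<Sum>j<n. Polynomial.smult (coeff p j) (monom 1 j))" by (simp add: smult_monom)
    also have "\<dots> \<in> V.span B"
      by (intro V.span_sum V.span_scale V.span_base) (auto simp: B_def)
    finally show "p \<in> V.span B" .
  qed
  have spanB: "V.span B = Cn n" by (rule V.span_subspace[OF BC CB Cn_subspace[OF n]])
  have spanC: "V.span (Cn n) = Cn n" using Cn_subspace[OF n] by simp
  have indep: "V.independent B"
  proof (rule V.independent_if_scalars_zero)
    show "finite B" unfolding B_def by simp
    fix f x assume s: "(\<Sum>x\<in>B. Polynomial.smult (f x) x) = 0" and x: "x \<in> B"
    then obtain i where i: "i < n" and xi: "x = monom 1 i" unfolding B_def by auto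
    have "0 = coeff (\<Sum>x\<in>B. Polynomial.smult (f x) x) i" using s by simp
    also have "\<dots> = (\<Sum>j<n. f (monom 1 j) * coeff (monom (1::complex) j) i)"
      unfolding B_def by (simp add: coeff_sum sum.reindex[OF inj])
    also have "\<dots> = (\<Sum>j<n. if j = i then f (monom 1 j) else 0)"
      by (rule sum.cong) (auto simp: coeff_monom)
    also have "\<dots> = f x" using i xi by simp
    finally show "f x = 0" by simp
  qed
  have "V.dim (Cn n) = card B" 
  proof (rule V.dim_eq_card)
    show "V.span B = V.span (Cn n)" unfolding spanB spanC by (rule refl)
    show "V.independent B" by (rule indep)
  qed
  thus ?thesis using cardB by simp
qed

theorem theorem2p5:
  fixes n :: nat and e :: complex
  assumes "n \<ge> 2" and "primitive_root n e"
  shows "vector_space (Polynomial.smult :: complex \<Rightarrow> complex poly \<Rightarrow> complex poly)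
    \<and> Modules.module.subspace (Polynomial.smult :: complex \<Rightarrow> complex poly \<Rightarrow> complex poly) (Cn n)
    \<and> vector_space.dim (Polynomial.smult :: complex \<Rightarrow> complex poly \<Rightarrow> complex poly) (Cn n) = n
    \<and> (\<forall>p\<in>Cn n. \<forall>q\<in>Cn n. circ n e p q \<in> Cn n)
    \<and> (\<forall>a. \<forall>p\<in>Cn n. \<forall>q\<in>Cn n. \<forall>r\<in>Cn n.
          circ n e (Polynomial.smult a p + q) r = Polynomial.smult a (circ n e p r) + circ n e q r)
    \<and> (\<forall>p\<in>Cn n. \<forall>q\<in>Cn n. circ n e p q = circ n e q p)
    \<and> (\<forall>x\<in>Cn n. \<forall>y\<in>Cn n. \<forall>z\<in>Cn n. \<forall>w\<in>Cn n.
          circ n e (circ n e x y) (circ n e z w) = circ n e (circ n e x z) (circ n e y w))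
    \<and> (\<forall>c\<in>Cn n. \<forall>d\<in>Cn n. c \<noteq> 0 \<and> circ n e c c = c \<and> d \<noteq> 0 \<and> circ n e d d = d
          \<longrightarrow> spectrum_Cn n e c = spectrum_Cn n e d)
    \<and> (\<forall>p\<in>Cn n. principal_power (circ n e) (n + 1) p = Polynomial.smult (beta n e p) p)
    \<and> (\<forall>p\<in>Cn n. \<forall>q\<in>Cn n. beta n e (circ n e p q) = beta n e p * beta n e q)"
proof -
  have n: "0 < n" using assms(1) by simp
  note A = assms
  show ?thesis
    using vs_poly Cn_subspace[OF n] Cn_dim[OF n]
      circ_Cn[OF A] circ_lin[OF A] circ_comm[OF A] circ_medial[OF A]
      idem_spectrum[OF A] pp_main[OF A] beta_circ[OF A]
    by auto
qed

end
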